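(* For all positive integers $s,k$ and every integer $n\geq 2$, the graph $sL_{n+1}\cup kL_n$ (the disjoint union of $s$ copies of $L_{n+1}$ and $k$ copies of $L_n$) is $C_4$-supermagic.
   Context: All graphs are finite and simple. For a graph $H$, a graph $G=(V,E)$ has an $H$-covering if every edge of $G$ belongs to a subgraph of $G$ isomorphic to $H$. For such $G$, an $H$-magic labeling is a bijection $\lambda: V\cup E\to\{1,2,\dots,|V|+|E|\}$ for which there is a constant $c$ such that for every subgraph $H'=(V',E')$ of $G$ isomorphic to $H$, $\sum_{v\in V'}\lambda(v)+\sum_{e\in E'}\lambda(e)=c$. It is $H$-supermagic if moreover $\{\lambda(v):v\in V\}=\{1,\dots,|V|\}$; $G$ is $H$-supermagic if it admits such a labeling. $C_k$ is the cycle of length $k$. $sG$ denotes the disjoint union of $s$ copies of $G$, and $\cup$ denotes disjoint union. The ladder $L_n=P_n\times P_2$ ($n\ge2$) has vertices $u_i,v_i$ ($1\le i\le n$) and edges $u_iv_i$ ($1\le i\le n$), $u_iu_{i+1}$ and $v_iv_{i+1}$ ($1\le i\le n-1$). *)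

theory Defs
  imports Main
begin

definition simple_graph :: "'a set \<Rightarrow> 'a set set \<Rightarrow> bool" where
  "simple_graph V E \<longleftrightarrow> finite V \<and> (\<forall>e\<in>E. e \<subseteq> V \<and> card e = 2)"

definition C4_subgraphs :: "'a set \<Rightarrow> 'a set set \<Rightarrow> ('a set \<times> 'a set set) set" where
  "C4_subgraphs V E = {(V', E'). \<exists>a b c d. distinct [a, b, c, d] \<and>
      V' = {a, b, c, d} \<and> E' = {{a, b}, {b, c}, {c, d}, {d, a}} \<and>
      V' \<subseteq> V \<and> E' \<subseteq> E}"

definition C4_covering :: "'a set \<Rightarrow> 'a set set \<Rightarrow> bool" where
  "C4_covering V E \<longleftrightarrow> (\<forall>e\<in>E. \<exists>(V', E')\<in>C4_subgraphs V E. e \<in> E')"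

definition C4_magic_labeling ::
  "'a set \<Rightarrow> 'a set set \<Rightarrow> ('a \<Rightarrow> nat) \<Rightarrow> ('a set \<Rightarrow> nat) \<Rightarrow> bool" where
  "C4_magic_labeling V E lv le \<longleftrightarrow>
     bij_betw (case_sum lv le) (V <+> E) {1..card V + card E} \<and>
     (\<exists>c. \<forall>(V', E')\<in>C4_subgraphs V E. sum lv V' + sum le E' = c)"

definition C4_supermagic_labeling ::
  "'a set \<Rightarrow> 'a set set \<Rightarrow> ('a \<Rightarrow> nat) \<Rightarrow> ('a set \<Rightarrow> nat) \<Rightarrow> bool" where
  "C4_supermagic_labeling V E lv le \<longleftrightarrow>
     C4_magic_labeling V E lv le \<and> lv ` V = {1..card V}"

definition C4_supermagic :: "'a set \<Rightarrow> 'a set set \<Rightarrow> bool" where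
  "C4_supermagic V E \<longleftrightarrow> simple_graph V E \<and> C4_covering V E \<and>
     (\<exists>lv le. C4_supermagic_labeling V E lv le)"

text \<open>Vertex (j,i,b): copy j (j < s+k), position i
  (1 \<le> i \<le> length of copy j), side b (False = u_i, True = v_i).\<close>

definition lad_len :: "nat \<Rightarrow> nat \<Rightarrow> nat \<Rightarrow> nat" where
  "lad_len s n j = (if j < s then n + 1 else n)"

definition ladders_V :: "nat \<Rightarrow> nat \<Rightarrow> nat \<Rightarrow> (nat \<times> nat \<times> bool) set" where
  "ladders_V s k n = {(j, i, b). j < s + k \<and> 1 \<le> i \<and> i \<le> lad_len s n j}"

definition ladders_E :: "nat \<Rightarrow> nat \<Rightarrow> nat \<Rightarrow> (nat \<times> nat \<times> bool) set set" where
  "ladders_E s k n =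
     {{(j, i, False), (j, i, True)} | j i. j < s + k \<and> 1 \<le> i \<and> i \<le> lad_len s n j} \<union>
     {{(j, i, b), (j, i + 1, b)} | j i b. j < s + k \<and> 1 \<le> i \<and> i < lad_len s n j}"

end

theory Submission imports Defs begin

definition ypos :: "nat \<Rightarrow> nat \<Rightarrow> nat" where
  "ypos N q = (if even q then (N - 1) div 2 - q div 2 else N - 1 - q div 2)"

lemma ypos_cases:
  obtains m where "q = 2*m" "ypos N q = (N - 1) div 2 - m"
  | m where "q = Suc (2*m)" "ypos N q = N - 1 - m"
proof (cases "even q")
  case True
  then obtain m where "q = 2*m" by (auto elim: evenE)
  thus ?thesis using that(1)[of m] by (simp add: ypos_def)
next
  case False
  then obtain m where "q = Suc (2*m)" by (auto elim: oddE)
  thus ?thesis using that(2)[of m] by (simp add: ypos_def)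
qed

lemma ypos_lt: "q < N \<Longrightarrow> ypos N q < N"
  by (cases q N rule: ypos_cases) auto

lemma ypos_inj: assumes "q < N" "q' < N" "ypos N q = ypos N q'" shows "q = q'"
proof -
  obtain h r where hr: "N - 1 = 2*h + r" "r < 2" by (metis div_mult_mod_eq mod_less_divisor zero_less_numeral mult.commute)
  have hd: "(N - 1) div 2 = h" using hr by simp
  show ?thesis
  proof (cases q N rule: ypos_cases)
    case (1 m) note a = this
    show ?thesis proof (cases q' N rule: ypos_cases)
      case (1 m') then show ?thesis using a assms hd hr by simp
    next
      case (2 m') then show ?thesis using a assms hd hr by simp
    qed
  next
    case (2 m) note a = this
    show ?thesis proof (cases q' N rule: ypos_cases)
      case (1 m') then show ?thesis using a assms hd hr by simp
    next
      case (2 m') then show ?thesis using a assms hd hr by simp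
    qed
  qed
qed

lemma ypos_sum: assumes "Suc q < N"
  shows "Suc (q + 2 * ypos N q + Suc q + 2 * ypos N (Suc q)) = 2 * ((N - 1) div 2) + 2 * N"
proof -
  obtain h r where hr: "N - 1 = 2*h + r" "r < 2" by (metis div_mult_mod_eq mod_less_divisor zero_less_numeral mult.commute)
  have hd: "(N - 1) div 2 = h" using hr by simp
  show ?thesis
  proof (cases q N rule: ypos_cases)
    case (1 m)
    hence "ypos N (Suc q) = N - 1 - m" by (simp add: ypos_def)
    thus ?thesis using 1 assms hd hr by simp
  next
    case (2 m)
    hence "ypos N (Suc q) = h - Suc m" using hd by (simp add: ypos_def)
    thus ?thesis using 2 assms hd hr by simp
  qed
qed

lemma min_Suc_split: "min (Suc j) (s::nat) = min j s + (if j < s then 1 else 0)"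
  by (cases "j < s") (simp_all add: min_def)

lemma gen_less:
  fixes c s j j' x x' :: nat
  assumes "j < j'" "x < c + (if j < s then 1 else 0)"
  shows "j*c + min j s + x < j'*c + min j' s + x'"
proof -
  have m: "min (Suc j) s \<le> min j' s" using assms(1) by (simp add: min_def)
  have "Suc j * c \<le> j'*c" using assms(1) by (intro mult_le_mono1) simp
  moreover have "Suc j * c = j*c + c" by simp
  ultimately show ?thesis using assms(2) m min_Suc_split[of j s] by linarith
qed

lemma gen_inj:
  fixes c s j j' x x' :: nat
  assumes "x < c + (if j < s then 1 else 0)" "x' < c + (if j' < s then 1 else 0)"
    "j*c + min j s + x = j'*c + min j' s + x'"
  shows "j = j' \<and> x = x'"
proof -
  have "\<not> j < j'" using gen_less[OF _ assms(1), of j' x'] assms(3) by linarith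
  moreover have "\<not> j' < j" using gen_less[OF _ assms(2), of j x] assms(3) by linarith
  ultimately have "j = j'" by simp
  thus ?thesis using assms(3) by simp
qed

definition adjR :: "nat \<times> nat \<times> bool \<Rightarrow> nat \<times> nat \<times> bool \<Rightarrow> bool" where
  "adjR x y = (case x of (j,i,b) \<Rightarrow> case y of (j',i',b') \<Rightarrow>
     j = j' \<and> ((i = i' \<and> b \<noteq> b') \<or> (b = b' \<and> (i' = Suc i \<or> i = Suc i'))))"

definition orient :: "nat \<Rightarrow> nat \<Rightarrow> ((nat \<times> nat \<times> bool) \<times> (nat \<times> nat \<times> bool) \<times> (nat \<times> nat \<times> bool) \<times> (nat \<times> nat \<times> bool)) set" where
  "orient j i = (let A = (j,i,False); B = (j,i,True); C = (j,Suc i,True); D = (j,Suc i,False) in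
     {(A,B,C,D),(B,C,D,A),(C,D,A,B),(D,A,B,C),(A,D,C,B),(D,C,B,A),(C,B,A,D),(B,A,D,C)})"

lemma cyc4:
  assumes "adjR (j1,i1,b1) (j2,i2,b2)" "adjR (j2,i2,b2) (j3,i3,b3)" "adjR (j3,i3,b3) (j4,i4,b4)"
    "adjR (j4,i4,b4) (j1,i1,b1)" "distinct [(j1,i1,b1),(j2,i2,b2),(j3,i3,b3),(j4,i4,b4)]"
  shows "((j1,i1,b1),(j2,i2,b2),(j3,i3,b3),(j4,i4,b4)) \<in> orient j1 (min (min i1 i2) (min i3 i4))"
  using assms unfolding adjR_def orient_def Let_def
  apply (cases b1; cases b2; cases b3; cases b4)
  apply (auto simp: min_def)
  done


definition rungE :: "nat \<Rightarrow> nat \<Rightarrow> (nat \<times> nat \<times> bool) set" where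
  "rungE j i = {(j,i,False),(j,i,True)}"
definition railE :: "nat \<Rightarrow> nat \<Rightarrow> bool \<Rightarrow> (nat \<times> nat \<times> bool) set" where
  "railE j i b = {(j,i,b),(j,Suc i,b)}"

lemma rungE_eq: "rungE j i = rungE j' i' \<longleftrightarrow> j = j' \<and> i = i'"
  by (auto simp: rungE_def doubleton_eq_iff)
lemma railE_eq: "railE j i b = railE j' i' b' \<longleftrightarrow> j = j' \<and> i = i' \<and> b = b'"
  by (auto simp: railE_def doubleton_eq_iff)
lemma rung_ne_rail: "rungE j i \<noteq> railE j' i' b"
  by (auto simp: rungE_def railE_def doubleton_eq_iff)

lemma sum_if_nat: "(\<Sum>j<s+k. (if j < s then (a::nat) else b)) = s*a + k*b"
proof (induct k)
  case 0
  have "(\<Sum>j<s. (if j < s then a else b)) = (\<Sum>j<s. a)" by (rule sum.cong) auto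
  thus ?case by simp
next
  case (Suc k) thus ?case by simp
qed

locale lad =
  fixes s k n :: nat
  assumes s1: "1 \<le> s" and k1: "1 \<le> k" and n2: "2 \<le> n"
begin

definition "N = (s+k)*n + s"
definition "M = (s+k)*(n-1) + s"
definition "pos j i = j*n + min j s + (i - 1)"
definition "tr j i = j*(n-1) + min j s + (i - 1)"
definition lvl :: "nat \<times> nat \<times> bool \<Rightarrow> nat" where
  "lvl x = (case x of (j,i,b) \<Rightarrow> if b then N + 1 + ypos N (pos j i) else pos j i + 1)"
definition "railv j i b = (if b then 3*N + 2*M - tr j i else 3*N + 1 + tr j i)"
definition lel :: "(nat \<times> nat \<times> bool) set \<Rightarrow> nat" where
  "lel e = (if \<exists>j i. e = rungE j i then (case (THE (j,i). e = rungE j i) of (j,i) \<Rightarrow> 2*N+1+ypos N (pos j i))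
     else (case (THE (j,i,b). e = railE j i b) of (j,i,b) \<Rightarrow> railv j i b))"
definition "magicc = 2*((N - 1) div 2) + 14*N + 2*M + 6"

lemma L_eq: "lad_len s n j = n + (if j < s then 1 else 0)"
  by (simp add: lad_len_def)

lemma lel_rung: "lel (rungE j i) = 2*N+1+ypos N (pos j i)"
proof -
  have "(THE (j',i'). rungE j i = rungE j' i') = (j,i)"
    by (rule the_equality) (auto simp: rungE_eq)
  thus ?thesis unfolding lel_def by auto
qed

lemma lel_rail: "lel (railE j i b) = railv j i b"
proof -
  have "(THE (j',i',b'). railE j i b = railE j' i' b') = (j,i,b)"
    by (rule the_equality) (auto simp: railE_eq)
  moreover have "\<not> (\<exists>j' i'. railE j i b = rungE j' i')" using rung_ne_rail by metis
  ultimately show ?thesis unfolding lel_def by auto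
qed

lemma lel_simps:
  "lel {(j,i,False),(j,i,True)} = 2*N+1+ypos N (pos j i)"
  "lel {(j,i,True),(j,i,False)} = 2*N+1+ypos N (pos j i)"
  "lel {(j,i,b),(j,Suc i,b)} = railv j i b"
  "lel {(j,Suc i,b),(j,i,b)} = railv j i b"
  using lel_rung[of j i] lel_rail[of j i b]
  by (auto simp: rungE_def railE_def insert_commute)

lemma mem_V: "(j,i,b) \<in> ladders_V s k n \<longleftrightarrow> j < s+k \<and> 1 \<le> i \<and> i \<le> lad_len s n j"
  by (simp add: ladders_V_def)

lemma mem_E: "e \<in> ladders_E s k n \<longleftrightarrow>
   (\<exists>j i. j < s+k \<and> 1 \<le> i \<and> i \<le> lad_len s n j \<and> e = rungE j i) \<or>
   (\<exists>j i b. j < s+k \<and> 1 \<le> i \<and> i < lad_len s n j \<and> e = railE j i b)"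
  unfolding ladders_E_def rungE_def railE_def by (simp only: Suc_eq_plus1) blast

lemma pos_lt: "j < s+k \<Longrightarrow> 1 \<le> i \<Longrightarrow> i \<le> lad_len s n j \<Longrightarrow> pos j i < N"
  using gen_less[of j "s+k" "i - 1" n s 0] unfolding pos_def N_def L_eq by auto

lemma pos_inj: assumes "1 \<le> i" "i \<le> lad_len s n j" "1 \<le> i'" "i' \<le> lad_len s n j'"
   "pos j i = pos j' i'" shows "j = j' \<and> i = i'"
proof -
  have "j = j' \<and> i - 1 = i' - 1"
    by (rule gen_inj[of "i - 1" n j s "i' - 1" j']) (use assms in \<open>auto simp: pos_def L_eq\<close>)
  thus ?thesis using assms by auto
qed

lemma tr_lt: "j < s+k \<Longrightarrow> 1 \<le> i \<Longrightarrow> i < lad_len s n j \<Longrightarrow> tr j i < M"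
  using gen_less[of j "s+k" "i - 1" "n - 1" s 0] n2 unfolding tr_def M_def L_eq by auto

lemma tr_inj: assumes "1 \<le> i" "i < lad_len s n j" "1 \<le> i'" "i' < lad_len s n j'"
   "tr j i = tr j' i'" shows "j = j' \<and> i = i'"
proof -
  have "j = j' \<and> i - 1 = i' - 1"
    by (rule gen_inj[of "i - 1" "n - 1" j s "i' - 1" j']) (use assms n2 in \<open>auto simp: tr_def L_eq\<close>)
  thus ?thesis using assms by auto
qed


lemma sumL: "(\<Sum>j<s+k. lad_len s n j) = N"
proof -
  have "(\<Sum>j<s+k. lad_len s n j) = (\<Sum>j<s+k. (if j < s then n+1 else n))"
    by (simp add: lad_len_def)
  also have "\<dots> = s*(n+1) + k*n" by (rule sum_if_nat)
  finally show ?thesis by (simp add: N_def algebra_simps)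
qed

lemma sumL1: "(\<Sum>j<s+k. lad_len s n j - 1) = M"
proof -
  have "(\<Sum>j<s+k. lad_len s n j - 1) = (\<Sum>j<s+k. (if j < s then n else n - 1))"
    by (rule sum.cong) (auto simp: lad_len_def)
  also have "\<dots> = s*n + k*(n-1)" by (rule sum_if_nat)
  also have "\<dots> = M" using n2 unfolding M_def by (cases n) (simp_all add: algebra_simps)
  finally show ?thesis .
qed

lemma V_Sigma: "ladders_V s k n = Sigma {..<s+k} (\<lambda>j. {1..lad_len s n j} \<times> (UNIV::bool set))"
  unfolding ladders_V_def by auto

lemma card_V: "card (ladders_V s k n) = 2*N"
proof -
  have "card (ladders_V s k n) = (\<Sum>j<s+k. card ({1..lad_len s n j} \<times> (UNIV::bool set)))"
    unfolding V_Sigma by (rule card_SigmaI) auto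
  also have "\<dots> = (\<Sum>j<s+k. 2 * lad_len s n j)"
    by (simp add: card_cartesian_product mult.commute)
  also have "\<dots> = 2*N" by (simp add: sum_distrib_left[symmetric] sumL)
  finally show ?thesis .
qed

lemma rung_mem: "j < s+k \<Longrightarrow> 1 \<le> i \<Longrightarrow> i \<le> lad_len s n j \<Longrightarrow> rungE j i \<in> ladders_E s k n"
  unfolding mem_E by blast
lemma rail_mem: "j < s+k \<Longrightarrow> 1 \<le> i \<Longrightarrow> i < lad_len s n j \<Longrightarrow> railE j i b \<in> ladders_E s k n"
  unfolding mem_E by blast

definition "RI = Sigma {..<s+k} (\<lambda>j. {1..lad_len s n j})"
definition "HI = Sigma {..<s+k} (\<lambda>j. {1..<lad_len s n j} \<times> (UNIV::bool set))"

lemma E_split: "ladders_E s k n = (\<lambda>(j,i). rungE j i) ` RI \<union> (\<lambda>(j,i,b). railE j i b) ` HI"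
proof
  show "ladders_E s k n \<subseteq> (\<lambda>(j,i). rungE j i) ` RI \<union> (\<lambda>(j,i,b). railE j i b) ` HI"
  proof
    fix e assume "e \<in> ladders_E s k n"
    then consider j i where "j < s+k" "1 \<le> i" "i \<le> lad_len s n j" "e = rungE j i"
      | j i b where "j < s+k" "1 \<le> i" "i < lad_len s n j" "e = railE j i b"
      unfolding mem_E by blast
    thus "e \<in> (\<lambda>(j,i). rungE j i) ` RI \<union> (\<lambda>(j,i,b). railE j i b) ` HI"
    proof cases
      case 1 thus ?thesis by (intro UnI1 rev_image_eqI[of "(j,i)"]) (auto simp: RI_def)
    next
      case 2 thus ?thesis by (intro UnI2 rev_image_eqI[of "(j,i,b)"]) (auto simp: HI_def)
    qed
  qed
next
  show "(\<lambda>(j,i). rungE j i) ` RI \<union> (\<lambda>(j,i,b). railE j i b) ` HI \<subseteq> ladders_E s k n"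
    unfolding RI_def HI_def by (auto intro: rung_mem rail_mem)
qed

lemma card_RI: "card RI = N"
  unfolding RI_def by (subst card_SigmaI) (auto simp: sumL)

lemma card_HI: "card HI = 2*M"
proof -
  have "card HI = (\<Sum>j<s+k. card ({1..<lad_len s n j} \<times> (UNIV::bool set)))"
    unfolding HI_def by (rule card_SigmaI) auto
  also have "\<dots> = (\<Sum>j<s+k. 2 * (lad_len s n j - 1))"
    by (simp add: card_cartesian_product mult.commute)
  also have "\<dots> = 2*M" using sumL1 by (simp add: sum_distrib_left[symmetric])
  finally show ?thesis .
qed

lemma card_E: "card (ladders_E s k n) = N + 2*M"
proof -
  have fR: "finite RI" and fH: "finite HI" unfolding RI_def HI_def by auto
  have i1: "inj_on (\<lambda>(j,i). rungE j i) RI" by (auto simp: inj_on_def rungE_eq)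
  have i2: "inj_on (\<lambda>(j,i,b). railE j i b) HI" by (auto simp: inj_on_def railE_eq)
  have d: "(\<lambda>(j,i). rungE j i) ` RI \<inter> (\<lambda>(j,i,b). railE j i b) ` HI = {}"
    using rung_ne_rail by fastforce
  show ?thesis unfolding E_split
    by (subst card_Un_disjoint) (use fR fH d in auto, simp add: card_image[OF i1] card_image[OF i2] card_RI card_HI)
qed

lemma N_pos: "N > 0" using s1 by (simp add: N_def)

lemma fin_V: "finite (ladders_V s k n)" by (rule card_ge_0_finite) (simp add: card_V N_pos)
lemma fin_E: "finite (ladders_E s k n)" by (rule card_ge_0_finite) (simp add: card_E N_pos)


lemma lvl_simps [simp]: "lvl (j,i,False) = pos j i + 1" "lvl (j,i,True) = N + 1 + ypos N (pos j i)"
  by (simp_all add: lvl_def)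

lemma lvl_range: "x \<in> ladders_V s k n \<Longrightarrow> 1 \<le> lvl x \<and> lvl x \<le> 2*N"
proof -
  assume x: "x \<in> ladders_V s k n"
  obtain j i b where xe: "x = (j,i,b)" by (cases x)
  have p: "pos j i < N" using x xe pos_lt by (auto simp: mem_V)
  show ?thesis using p ypos_lt[OF p] xe by (cases b) auto
qed

lemma inj_lvl: "inj_on lvl (ladders_V s k n)"
proof (rule inj_onI)
  fix x y assume x: "x \<in> ladders_V s k n" and y: "y \<in> ladders_V s k n" and e: "lvl x = lvl y"
  obtain j i b where xe: "x = (j,i,b)" by (cases x)
  obtain j' i' b' where ye: "y = (j',i',b')" by (cases y)
  have xv: "j < s+k" "1 \<le> i" "i \<le> lad_len s n j" using x xe by (auto simp: mem_V)
  have yv: "j' < s+k" "1 \<le> i'" "i' \<le> lad_len s n j'" using y ye by (auto simp: mem_V)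
  have p: "pos j i < N" "pos j' i' < N" using xv yv pos_lt by auto
  have "pos j i = pos j' i' \<and> b = b'"
  proof (cases b; cases b')
    assume "b" "b'" thus ?thesis using e xe ye ypos_inj[OF p] by simp
  next
    assume "b" "\<not> b'" thus ?thesis using e xe ye p by simp
  next
    assume "\<not> b" "b'" thus ?thesis using e xe ye p by simp
  next
    assume "\<not> b" "\<not> b'" thus ?thesis using e xe ye by simp
  qed
  thus "x = y" using pos_inj[OF xv(2,3) yv(2,3)] xe ye by auto
qed

lemma railv_range: "j < s+k \<Longrightarrow> 1 \<le> i \<Longrightarrow> i < lad_len s n j \<Longrightarrow>
   (if b then 3*N + M < railv j i b \<and> railv j i b \<le> 3*N + 2*M else 3*N < railv j i b \<and> railv j i b \<le> 3*N + M)"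
  using tr_lt[of j i] by (auto simp: railv_def)

lemma lel_range: "e \<in> ladders_E s k n \<Longrightarrow> 2*N < lel e \<and> lel e \<le> 3*N + 2*M"
proof -
  assume "e \<in> ladders_E s k n"
  then consider j i where "j < s+k" "1 \<le> i" "i \<le> lad_len s n j" "e = rungE j i"
      | j i b where "j < s+k" "1 \<le> i" "i < lad_len s n j" "e = railE j i b"
      unfolding mem_E by blast
  thus ?thesis
  proof cases
    case 1 thus ?thesis using pos_lt[of j i] ypos_lt[of "pos j i" N] by (simp add: lel_rung)
  next
    case 2 thus ?thesis using railv_range[of j i b] by (simp add: lel_rail split: if_splits)
  qed
qed

lemma inj_lel: "inj_on lel (ladders_E s k n)"
proof (rule inj_onI)
  fix x y assume x: "x \<in> ladders_E s k n" and y: "y \<in> ladders_E s k n" and e: "lel x = lel y"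
  from x consider j i where "j < s+k" "1 \<le> i" "i \<le> lad_len s n j" "x = rungE j i"
      | j i b where "j < s+k" "1 \<le> i" "i < lad_len s n j" "x = railE j i b"
      unfolding mem_E by blast
  note cx = this
  from y consider j' i' where "j' < s+k" "1 \<le> i'" "i' \<le> lad_len s n j'" "y = rungE j' i'"
      | j' i' b' where "j' < s+k" "1 \<le> i'" "i' < lad_len s n j'" "y = railE j' i' b'"
      unfolding mem_E by blast
  note cy = this
  show "x = y"
  proof (cases rule: cx)
    case (1 j i) note a = this
    have pa: "pos j i < N" using a pos_lt by auto
    show ?thesis
    proof (cases rule: cy)
      case (1 j' i')
      have pb: "pos j' i' < N" using 1 pos_lt by auto
      have "pos j i = pos j' i'" using ypos_inj[OF pa pb] e a 1 by (simp add: lel_rung)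
      thus ?thesis using pos_inj[of i j i' j'] a 1 by auto
    next
      case (2 j' i' b')
      thus ?thesis using e a 2 railv_range[of j' i' b'] ypos_lt[OF pa]
        by (simp add: lel_rung lel_rail split: if_splits)
    qed
  next
    case (2 j i b) note a = this
    show ?thesis
    proof (cases rule: cy)
      case (1 j' i')
      have pb: "pos j' i' < N" using 1 pos_lt by auto
      thus ?thesis using e a 1 railv_range[of j i b] ypos_lt[OF pb]
        by (simp add: lel_rung lel_rail split: if_splits)
    next
      case (2 j' i' b')
      have t: "tr j i < M" "tr j' i' < M" using a 2 tr_lt by auto
      have "tr j i = tr j' i' \<and> b = b'"
        using e a 2 t by (simp add: lel_rail railv_def split: if_splits)
      thus ?thesis using tr_inj[of i j i' j'] a 2 by auto
    qed
  qed
qed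

lemma bij: "bij_betw (case_sum lvl lel) (ladders_V s k n <+> ladders_E s k n)
              {1..card (ladders_V s k n) + card (ladders_E s k n)}"
proof -
  let ?f = "case_sum lvl lel" and ?A = "ladders_V s k n <+> ladders_E s k n"
  have inj: "inj_on ?f ?A"
  proof (rule inj_onI)
    fix x y assume x: "x \<in> ?A" and y: "y \<in> ?A" and e: "?f x = ?f y"
    show "x = y"
    proof (cases x)
      case (Inl a) note xa = this
      show ?thesis
      proof (cases y)
        case (Inl a') thus ?thesis using xa x y e inj_lvl by (auto simp: inj_on_def)
      next
        case (Inr e') thus ?thesis using xa x y e lvl_range[of a] lel_range[of e'] by auto
      qed
    next
      case (Inr a) note xa = this
      show ?thesis
      proof (cases y)
        case (Inl a') thus ?thesis using xa x y e lvl_range[of a'] lel_range[of a] by auto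
      next
        case (Inr e') thus ?thesis using xa x y e inj_lel by (auto simp: inj_on_def)
      qed
    qed
  qed
  have sub: "?f ` ?A \<subseteq> {1..card (ladders_V s k n) + card (ladders_E s k n)}"
  proof
    fix z assume "z \<in> ?f ` ?A"
    then obtain x where x: "x \<in> ?A" "z = ?f x" by blast
    show "z \<in> {1..card (ladders_V s k n) + card (ladders_E s k n)}"
    proof (cases x)
      case (Inl a) thus ?thesis using x lvl_range[of a] by (auto simp: card_V card_E)
    next
      case (Inr e) thus ?thesis using x lel_range[of e] by (auto simp: card_V card_E)
    qed
  qed
  have c: "card (?f ` ?A) = card {1..card (ladders_V s k n) + card (ladders_E s k n)}"
    using card_image[OF inj] card_Plus[OF fin_V fin_E] by simp
  have "?f ` ?A = {1..card (ladders_V s k n) + card (ladders_E s k n)}"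
    by (rule card_subset_eq[OF _ sub c]) simp
  thus ?thesis using inj by (simp add: bij_betw_def)
qed

lemma lvl_image: "lvl ` ladders_V s k n = {1..card (ladders_V s k n)}"
proof -
  have sub: "lvl ` ladders_V s k n \<subseteq> {1..card (ladders_V s k n)}"
    using lvl_range by (auto simp: card_V)
  have c: "card (lvl ` ladders_V s k n) = card {1..card (ladders_V s k n)}"
    using card_image[OF inj_lvl] by simp
  show ?thesis by (rule card_subset_eq[OF _ sub c]) simp
qed

lemma sq_sum:
  assumes "j < s+k" "1 \<le> i" "i < lad_len s n j"
  shows "lvl (j,i,False) + lvl (j,i,True) + lvl (j,Suc i,True) + lvl (j,Suc i,False)
     + lel (rungE j i) + lel (rungE j (Suc i)) + railv j i False + railv j i True = magicc"
proof -
  have ps: "pos j (Suc i) = Suc (pos j i)" using assms by (simp add: pos_def)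
  have pl: "Suc (pos j i) < N" using pos_lt[of j "Suc i"] assms ps by simp
  have t: "tr j i < M" using tr_lt assms by simp
  define D where "D = (N - 1) div 2"
  have y: "Suc (pos j i + 2 * ypos N (pos j i) + Suc (pos j i) + 2 * ypos N (Suc (pos j i)))
      = 2 * D + 2 * N" using ypos_sum[OF pl] unfolding D_def .
  have m: "magicc = 2 * D + 14*N + 2*M + 6" unfolding magicc_def D_def ..
  show ?thesis using y t pl unfolding lel_rung railv_def m by (simp add: ps)
qed

lemma edge_adj: "{x,y} \<in> ladders_E s k n \<Longrightarrow> adjR x y"
  unfolding mem_E rungE_def railE_def adjR_def by (auto simp: doubleton_eq_iff)

lemma magic:
  assumes "(V', E') \<in> C4_subgraphs (ladders_V s k n) (ladders_E s k n)"
  shows "sum lvl V' + sum lel E' = magicc"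
proof -
  obtain a b c d where dist: "distinct [a,b,c,d]" and V': "V' = {a,b,c,d}"
    and E': "E' = {{a, b}, {b, c}, {c, d}, {d, a}}" and VV: "V' \<subseteq> ladders_V s k n"
    and EE: "E' \<subseteq> ladders_E s k n"
    using assms unfolding C4_subgraphs_def by blast
  obtain j1 i1 b1 where a: "a = (j1,i1,b1)" by (cases a)
  obtain j2 i2 b2 where b: "b = (j2,i2,b2)" by (cases b)
  obtain j3 i3 b3 where c: "c = (j3,i3,b3)" by (cases c)
  obtain j4 i4 b4 where d: "d = (j4,i4,b4)" by (cases d)
  define i0 where "i0 = min (min i1 i2) (min i3 i4)"
  have o: "(a,b,c,d) \<in> orient j1 i0"
    unfolding a b c d i0_def
    by (rule cyc4) (use EE E' dist edge_adj a b c d in auto)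
  have vA: "(j1,i0,False) \<in> ladders_V s k n" and vD: "(j1,Suc i0,False) \<in> ladders_V s k n"
    using o VV V' unfolding orient_def Let_def by auto
  hence cond: "j1 < s+k" "1 \<le> i0" "i0 < lad_len s n j1" by (auto simp: mem_V)
  have sq: "lvl (j1,i0,False) + lvl (j1,i0,True) + lvl (j1,Suc i0,True) + lvl (j1,Suc i0,False)
     + lel (rungE j1 i0) + lel (rungE j1 (Suc i0)) + railv j1 i0 False + railv j1 i0 True = magicc"
    using sq_sum[OF cond] .
  have s1: "sum lvl V' = lvl a + lvl b + lvl c + lvl d" using dist V' by simp
  have ne: "{a,b} \<noteq> {b,c}" "{a,b} \<noteq> {c,d}" "{a,b} \<noteq> {d,a}" "{b,c} \<noteq> {c,d}"
     "{b,c} \<noteq> {d,a}" "{c,d} \<noteq> {d,a}" using dist by (auto simp: doubleton_eq_iff)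
  have s2: "sum lel E' = lel {a,b} + lel {b,c} + lel {c,d} + lel {d,a}"
    using ne E' by simp
  show ?thesis unfolding s1 s2 using o sq
    unfolding orient_def Let_def rungE_def by (auto simp: lel_simps simp del: lvl_simps)
qed

lemma sq_C4:
  assumes "j < s+k" "1 \<le> i" "i < lad_len s n j"
  shows "({(j,i,False),(j,i,True),(j,Suc i,True),(j,Suc i,False)},
          {{(j,i,False),(j,i,True)},{(j,i,True),(j,Suc i,True)},{(j,Suc i,True),(j,Suc i,False)},{(j,Suc i,False),(j,i,False)}})
     \<in> C4_subgraphs (ladders_V s k n) (ladders_E s k n)"
proof -
  have e1: "{(j,i,False),(j,i,True)} \<in> ladders_E s k n" using rung_mem[of j i] assms by (simp add: rungE_def)
  have e2: "{(j,i,True),(j,Suc i,True)} \<in> ladders_E s k n" using rail_mem[of j i True] assms by (simp add: railE_def)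
  have e3: "{(j,Suc i,True),(j,Suc i,False)} \<in> ladders_E s k n" using rung_mem[of j "Suc i"] assms
    by (simp add: rungE_def insert_commute)
  have e4: "{(j,Suc i,False),(j,i,False)} \<in> ladders_E s k n" using rail_mem[of j i False] assms
    by (simp add: railE_def insert_commute)
  have vs: "{(j,i,False),(j,i,True),(j,Suc i,True),(j,Suc i,False)} \<subseteq> ladders_V s k n"
    using assms by (simp add: mem_V)
  show ?thesis unfolding C4_subgraphs_def
    apply (simp only: mem_Collect_eq case_prod_conv)
    apply (rule exI[of _ "(j,i,False)"], rule exI[of _ "(j,i,True)"], rule exI[of _ "(j,Suc i,True)"],
           rule exI[of _ "(j,Suc i,False)"])
    using e1 e2 e3 e4 vs by simp
qed

lemma covering: "C4_covering (ladders_V s k n) (ladders_E s k n)"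
  unfolding C4_covering_def
proof
  fix e assume "e \<in> ladders_E s k n"
  then consider j i where "j < s+k" "1 \<le> i" "i \<le> lad_len s n j" "e = rungE j i"
      | j i b where "j < s+k" "1 \<le> i" "i < lad_len s n j" "e = railE j i b"
      unfolding mem_E by blast
  thus "\<exists>(V', E')\<in>C4_subgraphs (ladders_V s k n) (ladders_E s k n). e \<in> E'"
  proof cases
    case (1 j i)
    show ?thesis
    proof (cases "i < lad_len s n j")
      case True
      show ?thesis by (rule bexI[OF _ sq_C4[of j i]]) (use 1 True in \<open>auto simp: rungE_def\<close>)
    next
      case False
      hence ie: "i = lad_len s n j" using 1 by simp
      have i2: "2 \<le> i" using ie n2 by (simp add: lad_len_def)
      have c: "j < s+k" "1 \<le> i - 1" "i - 1 < lad_len s n j" using 1 ie i2 by auto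
      have si: "Suc (i - 1) = i" using i2 by simp
      show ?thesis by (rule bexI[OF _ sq_C4[OF c]]) (use 1 si in \<open>auto simp: rungE_def insert_commute\<close>)
    qed
  next
    case (2 j i b)
    have m: "e \<in> {{(j,i,False),(j,i,True)},{(j,i,True),(j,Suc i,True)},{(j,Suc i,True),(j,Suc i,False)},{(j,Suc i,False),(j,i,False)}}"
      using 2 by (cases b) (auto simp: railE_def insert_commute)
    show ?thesis by (rule bexI[OF _ sq_C4[of j i]]) (use 2 m in auto)
  qed
qed

lemma simple: "simple_graph (ladders_V s k n) (ladders_E s k n)"
  unfolding simple_graph_def
proof (rule conjI[OF fin_V], rule ballI)
  fix e assume "e \<in> ladders_E s k n"
  then consider j i where "j < s+k" "1 \<le> i" "i \<le> lad_len s n j" "e = rungE j i"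
      | j i b where "j < s+k" "1 \<le> i" "i < lad_len s n j" "e = railE j i b"
      unfolding mem_E by blast
  thus "e \<subseteq> ladders_V s k n \<and> card e = 2"
    by cases (auto simp: rungE_def railE_def mem_V)
qed

theorem main: "C4_supermagic (ladders_V s k n) (ladders_E s k n)"
  unfolding C4_supermagic_def C4_supermagic_labeling_def C4_magic_labeling_def
  using simple covering bij lvl_image magic by blast

end


theorem theorem10:
  fixes s k n :: nat
  assumes "s \<ge> 1" and "k \<ge> 1" and "n \<ge> 2"
  shows "C4_supermagic (ladders_V s k n) (ladders_E s k n)"
proof -
  interpret lad s k n using assms by unfold_locales
  show ?thesis by (rule main)
qed

end
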